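(* Let $f(x)=\log(1-x)$ or $f(x)=\log(1+x)$, and let $\lambda>-\tfrac12$, $\lambda\ne0$. Then for each $n\ge1$ the Gegenbauer coefficients of $f$ are \[ a_n^\lambda=\mu_n\,\frac{4^\lambda\Gamma(\lambda)\Gamma(\lambda+\frac12)}{\sqrt\pi}\cdot\frac{\Gamma(n+1)\Gamma(n+\lambda+1)}{n\,\Gamma(n+\lambda)\Gamma(n+1+2\lambda)}, \] where $\mu_n=-1$ for $f(x)=\log(1-x)$ and $\mu_n=(-1)^{n+1}$ for $f(x)=\log(1+x)$.
   Context: $C_n^{(\lambda)}$ is the Gegenbauer polynomial normalized by $C_n^{(\lambda)}(1)=\Gamma(n+2\lambda)/(n!\,\Gamma(2\lambda))$, orthogonal on $[-1,1]$ with weight $(1-x^2)^{\lambda-1/2}$, with $h_n^{(\lambda)}=\frac{2^{1-2\lambda}\pi}{\Gamma(\lambda)^2}\frac{\Gamma(n+2\lambda)}{\Gamma(n+1)(n+\lambda)}$; the Gegenbauer coefficients are $a_n^{\lambda}=\frac{1}{h_n^{(\lambda)}}\int_{-1}^1(1-x^2)^{\lambda-1/2}f(x)C_n^{(\lambda)}(x)\,dx$. *)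

theory Defs
  imports "HOL-Analysis.Analysis"
begin

text \<open>This gives the normalization C_n(1) = Gamma(n+2 lambda)/(n! Gamma(2 lambda)).\<close>
fun gegenbauer :: "real \<Rightarrow> nat \<Rightarrow> real \<Rightarrow> real" where
  "gegenbauer l 0 x = 1"
| "gegenbauer l (Suc 0) x = 2 * l * x"
| "gegenbauer l (Suc (Suc n)) x =
     (2 * x * (real n + 1 + l) * gegenbauer l (Suc n) x
      - (real n + 2 * l) * gegenbauer l n x) / (real n + 2)"

definition gegenbauer_h :: "real \<Rightarrow> nat \<Rightarrow> real" where
  "gegenbauer_h l n =
     (2 powr (1 - 2 * l) * pi / (Gamma l)^2) *
     (Gamma (real n + 2 * l) / (Gamma (real n + 1) * (real n + l)))"

definition gegenbauer_coeff :: "real \<Rightarrow> (real \<Rightarrow> real) \<Rightarrow> nat \<Rightarrow> real" where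
  "gegenbauer_coeff l f n =
     (1 / gegenbauer_h l n) *
     (LBINT x=-1..1. (1 - x^2) powr (l - 1/2) * f x * gegenbauer l n x)"

end

theory Submission
  imports Defs
begin

fun dgeg :: "real \<Rightarrow> nat \<Rightarrow> real \<Rightarrow> real" where
  "dgeg l 0 x = 0"
| "dgeg l (Suc 0) x = 2 * l"
| "dgeg l (Suc (Suc n)) x =
     (2 * (real n + 1 + l) * gegenbauer l (Suc n) x + 2 * x * (real n + 1 + l) * dgeg l (Suc n) x
      - (real n + 2 * l) * dgeg l n x) / (real n + 2)"

lemma gegenbauer_deriv: "(gegenbauer l n has_real_derivative dgeg l n x) (at x)"
proof (induction l n x rule: gegenbauer.induct)
  case (1 l x) then show ?case by simp
next
  case (2 l x) then show ?case by (auto intro!: derivative_eq_intros)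
next
  case (3 l n x)
  have *: "gegenbauer l (Suc (Suc n)) = (\<lambda>x. (1 / (real n + 2)) * (2 * x * (real n + 1 + l) * gegenbauer l (Suc n) x
      - (real n + 2 * l) * gegenbauer l n x))" by (rule ext) simp
  have pos: "real n + 2 \<noteq> 0" by simp
  show ?case unfolding * using 3 pos
    by (auto intro!: derivative_eq_intros simp: divide_simps) (simp add: algebra_simps)?
qed

lemma gegenbauer_id:
  "x * dgeg l (Suc m) x - dgeg l m x = real (Suc m) * gegenbauer l (Suc m) x \<and>
   (1 - x^2) * dgeg l (Suc m) x = - real (Suc m) * x * gegenbauer l (Suc m) x + (real m + 2*l) * gegenbauer l m x"
proof (induction m)
  case 0 then show ?case by (simp add: power2_eq_square algebra_simps)
next
  case (Suc m)
  define a where "a = gegenbauer l m x"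
  define b where "b = gegenbauer l (Suc m) x"
  define da where "da = dgeg l m x"
  define db where "db = dgeg l (Suc m) x"
  have IH1: "x * db - da = real (Suc m) * b" and IH2: "(1 - x^2) * db = - real (Suc m) * x * b + (real m + 2*l) * a"
    using Suc.IH unfolding a_def b_def da_def db_def by auto
  have c: "gegenbauer l (Suc (Suc m)) x = (2 * x * (real m + 1 + l) * b - (real m + 2 * l) * a) / (real m + 2)"
    by (simp add: a_def b_def)
  have dc: "dgeg l (Suc (Suc m)) x = (2 * (real m + 1 + l) * b + 2 * x * (real m + 1 + l) * db
      - (real m + 2 * l) * da) / (real m + 2)"
    by (simp add: a_def b_def da_def db_def)
  have da': "da = x * db - real (Suc m) * b" using IH1 by simp
  have dc2: "dgeg l (Suc (Suc m)) x = (real m + 1 + 2*l) * b + x * db"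
    unfolding dc da' by (simp add: field_simps)
  show ?case
  proof
    show "x * dgeg l (Suc (Suc m)) x - dgeg l (Suc m) x = real (Suc (Suc m)) * gegenbauer l (Suc (Suc m)) x"
    proof -
      have h: "(real m + 2) * ((1 - x^2) * db) = (real m + 2) * (- real (Suc m) * x * b + (real m + 2*l) * a)"
        using IH2 by simp
      show ?thesis unfolding dc2 c db_def[symmetric] using h
        by (simp add: field_simps power2_eq_square)
    qed
    show "(1 - x^2) * dgeg l (Suc (Suc m)) x = - real (Suc (Suc m)) * x * gegenbauer l (Suc (Suc m)) x + (real (Suc m) + 2*l) * gegenbauer l (Suc m) x"
    proof -
      have h: "x * (real m + 2) * ((1 - x^2) * db) = x * (real m + 2) * (- real (Suc m) * x * b + (real m + 2*l) * a)"
        using IH2 by simp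
      show ?thesis unfolding dc2 c db_def[symmetric] b_def[symmetric] using h
        by (simp add: field_simps power2_eq_square)
    qed
  qed
qed

lemma ereal_m1: "(-1::ereal) = ereal (-1)" by (simp add: one_ereal_def)

lemma einterval_m1_1: "einterval (-1) 1 = {-1<..<(1::real)}"
  unfolding einterval_def ereal_m1 by (auto simp: one_ereal_def)

lemma LBINT_m1_1: "(LBINT x=-1..1. f x) = (LBINT x:{-1<..<1}. f x)"
  by (subst interval_lebesgue_integral_le_eq) (auto simp: einterval_m1_1 ereal_m1 one_ereal_def)

lemma beta_sym:
  fixes r :: real
  assumes r: "r > -1"
  shows "set_integrable lborel {-1<..<1} (\<lambda>x. (1 - x^2) powr r)"
    "(LBINT x:{-1<..<1}. (1 - x^2) powr r) = 2 * 4 powr r * Beta (r+1) (r+1)"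
proof -
  define B where "B = (\<lambda>t::real. indicator {0..1} t * (t powr (r+1-1) * (1 - t) powr (r+1-1)))"
  have iB: "integrable lborel B"
    using integrable_Beta[of "r+1" "r+1"] r unfolding set_integrable_def B_def by simp
  have vB: "integral\<^sup>L lborel B = Beta (r+1) (r+1)"
    using set_borel_integral_eq_integral(2)[OF integrable_Beta[of "r+1" "r+1"]]
      has_integral_Beta_real[of "r+1" "r+1"] r
    unfolding B_def set_lebesgue_integral_def by (simp add: integral_unique)
  have eq: "B (1/2 + 1/2 * x) = 4 powr (-r) * (indicator {-1<..<1} x * (1 - x^2) powr r)" for x
  proof (cases "x \<in> {-1<..<1}")
    case True
    have "(1/2 + 1/2*x) powr r * (1 - (1/2 + 1/2*x)) powr r = ((1/2 + 1/2*x) * (1 - (1/2 + 1/2*x))) powr r"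
      by (simp add: powr_mult)
    also have "(1/2 + 1/2*x) * (1 - (1/2 + 1/2*x)) = (1 - x^2) / 4"
      by (simp add: field_simps power2_eq_square)
    also have "((1 - x^2) / 4) powr r = 4 powr (-r) * (1 - x^2) powr r"
      unfolding powr_divide powr_minus by (simp add: divide_inverse mult.commute)
    finally show ?thesis using True by (simp add: B_def indicator_def)
  next
    case False
    then have "x \<le> -1 \<or> x \<ge> 1" by auto
    then show ?thesis
    proof
      assume "x \<le> -1" then show ?thesis using False
        by (cases "x = -1") (auto simp: B_def indicator_def)
    next
      assume "x \<ge> 1" then show ?thesis using False
        by (cases "x = 1") (auto simp: B_def indicator_def)
    qed
  qed
  have i2: "integrable lborel (\<lambda>x. B (1/2 + 1/2 * x))"
    by (rule lborel_integrable_real_affine[OF iB]) simp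
  hence i25: "integrable lborel (\<lambda>x. 4 powr (-r) * (indicator {-1<..<1} x * (1 - x^2) powr r))"
    unfolding eq .
  have i3: "integrable lborel (\<lambda>x. indicator {-1<..<1} x * (1 - x^2) powr r)"
    using integrable_mult_right[OF i25, of "4 powr r"] by (simp add: powr_minus)
  thus "set_integrable lborel {-1<..<1} (\<lambda>x. (1 - x^2) powr r)"
    unfolding set_integrable_def by simp
  have "Beta (r+1) (r+1) = \<bar>1/2\<bar> *\<^sub>R integral\<^sup>L lborel (\<lambda>x. B (1/2 + 1/2 * x))"
    using lborel_integral_real_affine[of "1/2" B "1/2"] vB by simp
  also have "\<dots> = 1/2 * 4 powr (-r) * (LBINT x:{-1<..<1}. (1 - x^2) powr r)"
    unfolding eq set_lebesgue_integral_def by simp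
  finally show "(LBINT x:{-1<..<1}. (1 - x^2) powr r) = 2 * 4 powr r * Beta (r+1) (r+1)"
  proof -
    assume h: "Beta (r + 1) (r + 1) = 1 / 2 * 4 powr - r * (LBINT x:{-1<..<1}. (1 - x^2) powr r)"
    have "4 powr r * 4 powr - r = 1" by (simp add: powr_add[symmetric])
    then show ?thesis unfolding h by (simp add: algebra_simps)
  qed
qed

lemma Gamma_dup_real:
  fixes a :: real assumes "a > 0"
  shows "Gamma a * Gamma (a + 1/2) = 2 powr (1 - 2*a) * sqrt pi * Gamma (2*a)"
proof -
  have nz1: "complex_of_real a \<notin> \<int>\<^sub>\<le>\<^sub>0" using assms
    by (auto simp: of_real_in_nonpos_Ints_iff elim!: nonpos_Ints_cases)
  have nz2: "complex_of_real a + 1/2 \<notin> \<int>\<^sub>\<le>\<^sub>0" using assms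
    by (auto simp: nonpos_Ints_def complex_eq_iff)
  have "complex_of_real (Gamma a * Gamma (a + 1/2)) = Gamma (complex_of_real a) * Gamma (complex_of_real a + 1/2)"
    by (simp add: Gamma_complex_of_real[symmetric])
  also have "\<dots> = exp ((1 - 2*complex_of_real a) * of_real (ln 2)) * of_real (sqrt pi) * Gamma (2*complex_of_real a)"
    by (rule Gamma_legendre_duplication[OF nz1 nz2])
  also have "exp ((1 - 2*complex_of_real a) * of_real (ln 2)) = complex_of_real (2 powr (1 - 2*a))"
    by (simp add: powr_def exp_of_real[symmetric])
  also have "Gamma (2*complex_of_real a) = complex_of_real (Gamma (2*a))"
    by (simp add: Gamma_complex_of_real[symmetric])
  finally show ?thesis by (simp del: of_real_mult add: of_real_mult[symmetric])
qed

lemma Beta_same: "Beta (a::real) a = Gamma a * Gamma a / Gamma (2*a)"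
  unfolding Beta_def mult_2 ..

lemma aux_alg: "(g::real) > 0 \<Longrightarrow> h > 0 \<Longrightarrow> c > 0 \<Longrightarrow> 2*p*q = 1 \<Longrightarrow> 2*p*g*g/(g*h/(q*c)) = c*g/h"
  by (simp add: field_simps)

lemma W0_value:
  fixes l :: real assumes l: "l > -1/2"
  shows "(LBINT x:{-1<..<1}. (1 - x^2) powr (l - 1/2)) = sqrt pi * Gamma (l + 1/2) / Gamma (l + 1)"
proof -
  have "(LBINT x:{-1<..<1}. (1 - x^2) powr (l - 1/2)) = 2 * 4 powr (l - 1/2) * Beta (l+1/2) (l+1/2)"
    using beta_sym(2)[of "l - 1/2"] l by (simp add: add_ac)
  also have "\<dots> = 2 * 4 powr (l - 1/2) * Gamma (l+1/2) * Gamma (l+1/2) / Gamma (2*(l+1/2))"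
    using Beta_same[of "l+1/2"] by simp
  also have "Gamma (2*(l+1/2)) = Gamma (l+1/2) * Gamma (l+1) / (2 powr (1 - 2*(l+1/2)) * sqrt pi)"
  proof -
    have d: "Gamma (l+1/2) * Gamma (l+1) = 2 powr (1 - 2*(l+1/2)) * sqrt pi * Gamma (2*(l+1/2))"
      using Gamma_dup_real[of "l+1/2"] l by (simp add: add.assoc)
    have pos: "2 powr (1 - 2*(l+1/2)) * sqrt pi > 0" by simp
    show ?thesis unfolding d using pos by simp
  qed
  also have "4 powr (l - 1/2) = 2 powr (2*l - 1)"
  proof -
    have "(4::real) = 2 powr 2" by simp
    hence "4 powr (l - 1/2) = (2 powr 2) powr (l - 1/2)" by simp
    also have "\<dots> = 2 powr (2 * (l - 1/2))" by (rule powr_powr)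
    finally show ?thesis by (simp add: algebra_simps)
  qed
  finally have eq: "(LBINT x:{-1<..<1}. (1 - x^2) powr (l - 1/2)) =
     2 * 2 powr (2*l - 1) * Gamma (l + 1/2) * Gamma (l + 1/2) /
     (Gamma (l + 1/2) * Gamma (l + 1) / (2 powr (1 - 2 * (l + 1/2)) * sqrt pi))" .
  have g1: "Gamma (l + 1/2) > 0" "Gamma (l + 1) > 0" using l by auto
  have p: "2 * 2 powr (2*l - 1) * 2 powr (1 - 2 * (l + 1/2)) = (1::real)"
    by (simp add: powr_add[symmetric] algebra_simps)
  show ?thesis unfolding eq by (rule aux_alg[OF g1 _ p]) simp
qed

lemma gegenbauer_isCont: "isCont (gegenbauer l n) x"
  using DERIV_isCont[OF gegenbauer_deriv] .

lemma dgeg_isCont: "isCont (dgeg l n) x"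
proof (induction l n x rule: dgeg.induct)
  case (3 l n x)
  have *: "dgeg l (Suc (Suc n)) = (\<lambda>x. (2 * (real n + 1 + l) * gegenbauer l (Suc n) x + 2 * x * (real n + 1 + l) * dgeg l (Suc n) x
      - (real n + 2 * l) * dgeg l n x) / (real n + 2))" by (rule ext) simp
  show ?case unfolding * using 3 gegenbauer_isCont
    by (intro continuous_intros) auto
qed auto

lemma int_by_bound:
  fixes f :: "real \<Rightarrow> real"
  assumes r: "r > -1" and cf: "continuous_on {-1<..<1} f"
    and b: "\<And>x. x \<in> {-1<..<1} \<Longrightarrow> \<bar>f x\<bar> \<le> C * (1 - x^2) powr r"
  shows "set_integrable lborel {-1<..<1} f"
proof (rule set_integrable_bound[of lborel "{-1<..<1}" "\<lambda>x. C * (1 - x^2) powr r"])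
  show "set_integrable lborel {-1<..<1} (\<lambda>x. C * (1 - x^2) powr r)"
    using beta_sym(1)[OF r] by simp
  show "set_borel_measurable lborel {-1<..<1} f"
    unfolding set_borel_measurable_def
    using borel_measurable_continuous_on_indicator[OF _ cf] by simp
  show "AE x in lborel. x \<in> {-1<..<1} \<longrightarrow> norm (f x) \<le> norm (C * (1 - x^2) powr r)"
  proof (rule AE_I2, rule impI)
    fix x :: real assume x: "x \<in> {-1<..<1}"
    have "\<bar>f x\<bar> \<le> C * (1 - x^2) powr r" using b[OF x] .
    also have "\<dots> \<le> \<bar>C * (1 - x^2) powr r\<bar>" by simp
    finally show "norm (f x) \<le> norm (C * (1 - x^2) powr r)" by simp
  qed
qed

lemma ln_bound:
  fixes y d :: real
  assumes y: "0 < y" "y \<le> 2" and d: "d > 0"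
  shows "\<bar>ln y\<bar> \<le> (1/d + 2 powr d) * y powr (-d)"
proof (cases "y \<le> 1")
  case True
  have "d * (- ln y) = ln (y powr (-d))" using y by (simp add: ln_powr)
  also have "\<dots> \<le> y powr (-d) - 1" using y by (intro ln_le_minus_one) simp
  finally have "d * (- ln y) \<le> y powr (-d)" by simp
  hence "- ln y \<le> (1/d) * y powr (-d)" using d by (simp add: field_simps)
  moreover have "ln y \<le> 0" using True y by simp
  moreover have "0 \<le> 2 powr d * y powr (-d)" by simp
  ultimately have "\<bar>ln y\<bar> \<le> (1/d) * y powr (-d) + 2 powr d * y powr (-d)" by linarith
  thus ?thesis by (simp add: algebra_simps)
next
  case False
  have "ln y \<le> y - 1" using y by (intro ln_le_minus_one) simp
  also have "\<dots> \<le> 1" using y by simp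
  also have "1 = 2 powr d * 2 powr (-d)" by (simp add: powr_add[symmetric])
  also have "\<dots> \<le> 2 powr d * y powr (-d)"
    using y d by (intro mult_left_mono powr_mono2') auto
  finally have "ln y \<le> 2 powr d * y powr (-d)" .
  moreover have "ln y \<ge> 0" using False by simp
  moreover have "0 \<le> 1/d * y powr (-d)" using d by simp
  ultimately have "\<bar>ln y\<bar> \<le> (1/d) * y powr (-d) + 2 powr d * y powr (-d)" by linarith
  thus ?thesis by (simp add: algebra_simps)
qed

lemma ln_bound2:
  fixes s x d :: real
  assumes s: "s = 1 \<or> s = -1" and x: "x \<in> {-1<..<1}" and d: "d > 0"
  shows "\<bar>ln (1 - s*x)\<bar> \<le> ((1/d + 2 powr d) * 2 powr d) * (1 - x^2) powr (-d)"
proof -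
  have y: "0 < 1 - s*x" "1 - s*x \<le> 2" using s x by auto
  have x2: "x^2 < 1" using x by (simp add: abs_square_less_1 abs_less_iff)
  have e: "1 - s*x - (1 - x^2)/2 = (1 - s*x)^2/2"
    using s by (auto simp: power2_eq_square field_simps)
  have sq: "0 \<le> (1 - s*x)^2/2" by simp
  have low: "(1 - x^2)/2 \<le> 1 - s*x" "0 < (1 - x^2)/2"
    using e sq x2 by (linarith, simp)
  have A: "\<bar>ln (1 - s*x)\<bar> \<le> (1/d + 2 powr d) * (1 - s*x) powr (-d)"
    by (rule ln_bound[OF y d])
  have B1: "(1 - s*x) powr (-d) \<le> ((1 - x^2)/2) powr (-d)"
    using low d by (intro powr_mono2') auto
  have q: "2 powr (-d) * 2 powr d = (1::real)" by (simp add: powr_add[symmetric])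
  have B2: "((1 - x^2)/2) powr (-d) = 2 powr d * (1 - x^2) powr (-d)"
  proof -
    have "((1 - x^2)/2) powr (-d) = (1 - x^2) powr (-d) / 2 powr (-d)" by (rule powr_divide)
    also have "\<dots> = (1 - x^2) powr (-d) * (2 powr (-d) * 2 powr d) / 2 powr (-d)" by (simp only: q mult_1_right)
    also have "\<dots> = 2 powr d * (1 - x^2) powr (-d)" by simp
    finally show ?thesis .
  qed
  have K: "0 \<le> 1/d + 2 powr d" using d by simp
  have "\<bar>ln (1 - s*x)\<bar> \<le> (1/d + 2 powr d) * (2 powr d * (1 - x^2) powr (-d))"
    using order_trans[OF A mult_left_mono[OF B1 K]] unfolding B2 .
  thus ?thesis by (simp only: mult.assoc)
qed

lemma dgeg_I3: "(1 - x^2) * dgeg l (Suc m) x = - real (Suc m) * x * gegenbauer l (Suc m) x + (real m + 2*l) * gegenbauer l m x"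
  using gegenbauer_id[of x l m] by blast

lemma dgeg_I1: "dgeg l m x = x * dgeg l (Suc m) x - real (Suc m) * gegenbauer l (Suc m) x"
  using gegenbauer_id[of x l m] by linarith

lemma alg_deriv:
  fixes W W1 C C0 D D0 L x s n k l :: real
  assumes x2: "1 - x^2 \<noteq> 0" and sx: "1 - s*x \<noteq> 0" and s: "s = 1 \<or> s = -1"
    and I3: "(1 - x^2) * D = - n * x * C + k * C0" and I1: "D0 = x * D - n * C"
    and k: "k = n - 1 + 2*l" and W1: "W1 = W / (1 - x^2)"
  shows "((l - 1/2) * W1 * (-2*x)) * ((- n * x * C + k * C0) * L)
        + ((-n * (C + x * D) + k * D0) * L + (-s / (1 - s*x)) * (- n * x * C + k * C0)) * W
       = -(n*(n+2*l)) * (W * C * L) - s * (W * (1 + s*x) * D)"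
proof -
  have R: "- n * x * C + k * C0 = (1 - x^2) * D" using I3 by simp
  have f: "(1 - x^2) / (1 - s*x) = 1 + s*x"
    using s sx by (auto simp: field_simps power2_eq_square)
  have e1: "(W / (1 - x^2)) * ((1 - x^2) * D) = W * D" using x2 by simp
  have e2: "(-s / (1 - s*x)) * ((1 - x^2) * D) = - s * ((1 + s*x) * D)"
  proof -
    have "(-s / (1 - s*x)) * ((1 - x^2) * D) = -s * ((1 - x^2) / (1 - s*x)) * D"
      by (simp add: divide_inverse mult_ac)
    also have "\<dots> = - s * ((1 + s*x) * D)" unfolding f by simp
    finally show ?thesis .
  qed
  have "((l - 1/2) * W1 * (-2*x)) * ((- n * x * C + k * C0) * L)
        + ((-n * (C + x * D) + k * D0) * L + (-s / (1 - s*x)) * (- n * x * C + k * C0)) * W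
      = (l - 1/2) * (-2*x) * L * ((W / (1 - x^2)) * ((1 - x^2) * D))
        + ((-n * (C + x * D) + k * (x * D - n * C)) * L) * W + W * ((-s / (1 - s*x)) * ((1 - x^2) * D))"
    unfolding R W1 I1 by (simp add: algebra_simps)
  also have "\<dots> = (l - 1/2) * (-2*x) * L * (W * D)
        + ((-n * (C + x * D) + k * (x * D - n * C)) * L) * W + W * (- s * ((1 + s*x) * D))"
    unfolding e1 e2 ..
  also have "\<dots> = -(n*(n+2*l)) * (W * C * L) - s * (W * (1 + s*x) * D)"
    unfolding k by (simp add: algebra_simps)
  finally show ?thesis .
qed


lemma x2_pos: "x \<in> {-1<..<1::real} \<Longrightarrow> 0 < 1 - x^2"
  by (simp add: abs_square_less_1 abs_less_iff)

lemma powr_lim: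
  assumes e: "(e::real) > 0"
  shows "((\<lambda>x. (1 - x^2) powr e) \<longlongrightarrow> 0) (at_left 1)"
    "((\<lambda>x. (1 - x^2) powr e) \<longlongrightarrow> 0) (at_right (-1))"
proof -
  have ev1: "eventually (\<lambda>x. 0 \<le> 1 - x^2) (at_left (1::real))"
    using eventually_at_left_real[of "-1" 1] by (rule eventually_mono) (auto simp: abs_square_le_1 abs_le_iff)
  have ev2: "eventually (\<lambda>x. 0 \<le> 1 - x^2) (at_right (-1::real))"
    using eventually_at_right_real[of "-1" 1] by (rule eventually_mono) (auto simp: abs_square_le_1 abs_le_iff)
  have t1: "((\<lambda>x. 1 - x^2) \<longlongrightarrow> (1 - 1^2::real)) (at_left 1)" by (intro tendsto_intros)
  have t2: "((\<lambda>x. 1 - x^2) \<longlongrightarrow> (1 - (-1)^2::real)) (at_right (-1))" by (intro tendsto_intros)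
  show "((\<lambda>x. (1 - x^2) powr e) \<longlongrightarrow> 0) (at_left 1)"
    using tendsto_powr'[OF t1 tendsto_const[of e]] e ev1 by simp
  show "((\<lambda>x. (1 - x^2) powr e) \<longlongrightarrow> 0) (at_right (-1))"
    using tendsto_powr'[OF t2 tendsto_const[of e]] e ev2 by simp
qed

lemma ereal_lt_iff: "(-1::ereal) < ereal x \<longleftrightarrow> -1 < x" "ereal x < 1 \<longleftrightarrow> x < 1"
  by (simp_all add: ereal_m1 one_ereal_def)


lemma ibp:
  fixes l s :: real and m :: nat
  assumes l: "l > -1/2" and s: "s = 1 \<or> s = -1"
  shows "(LBINT x:{-1<..<1}. (1 - x^2) powr (l - 1/2) * gegenbauer l (Suc m) x * ln (1 - s*x))
       = - s / (real (Suc m) * (real (Suc m) + 2*l)) *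
         (LBINT x:{-1<..<1}. (1 - x^2) powr (l - 1/2) * (1 + s*x) * dgeg l (Suc m) x)"
proof -
  define n where "n = real (Suc m)"
  define k where "k = real m + 2*l"
  define S where "S = {-1<..<(1::real)}"
  define W where "W = (\<lambda>x::real. (1 - x^2) powr (l - 1/2))"
  define C where "C = gegenbauer l (Suc m)"
  define C0 where "C0 = gegenbauer l m"
  define D where "D = dgeg l (Suc m)"
  define D0 where "D0 = dgeg l m"
  define f1 where "f1 = (\<lambda>x. W x * C x * ln (1 - s*x))"
  define f2 where "f2 = (\<lambda>x. W x * (1 + s*x) * D x)"
  define F where "F = (\<lambda>x. W x * ((- n * x * C x + k * C0 x) * ln (1 - s*x)))"
  define d where "d = (l + 1/2)/2"
  define c' where "c' = (1/d + 2 powr d) * 2 powr d"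
  have d0: "d > 0" using l by (simp add: d_def)
  have kn: "k = n - 1 + 2*l" by (simp add: k_def n_def)
  have xS: "\<And>x. x \<in> S \<Longrightarrow> 0 < 1 - x^2" unfolding S_def by (rule x2_pos)
  have sxS: "\<And>x. x \<in> S \<Longrightarrow> 0 < 1 - s*x" using s by (auto simp: S_def)
  have W0: "\<And>x. 0 \<le> W x" by (simp add: W_def)
  have lnb: "\<And>x. x \<in> S \<Longrightarrow> \<bar>ln (1 - s*x)\<bar> \<le> c' * (1 - x^2) powr (-d)"
    unfolding c'_def S_def by (rule ln_bound2[OF s _ d0])
  have c'0: "c' \<ge> 0" using d0 by (simp add: c'_def)
  have cC: "continuous_on {-1..1} C" unfolding C_def
    by (intro continuous_at_imp_continuous_on ballI gegenbauer_isCont)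
  have cD: "continuous_on {-1..1} D" unfolding D_def
    by (intro continuous_at_imp_continuous_on ballI dgeg_isCont)
  obtain BC where BC: "\<And>x. x \<in> {-1..1} \<Longrightarrow> norm (C x) \<le> BC"
    using continuous_on_compact_bound[OF compact_Icc cC] by blast
  obtain BD where BD: "\<And>x. x \<in> {-1..1} \<Longrightarrow> norm (D x) \<le> BD"
    using continuous_on_compact_bound[OF compact_Icc cD] by blast
  have BCS: "\<And>x. x \<in> S \<Longrightarrow> \<bar>C x\<bar> \<le> BC" using BC by (auto simp: S_def)
  have BDS: "\<And>x. x \<in> S \<Longrightarrow> \<bar>D x\<bar> \<le> BD" using BD by (auto simp: S_def)
  have cW: "isCont W x" if xs: "x \<in> S" for x
  proof -
    have "1 - x^2 \<noteq> 0" using xS[OF xs] by simp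
    thus ?thesis unfolding W_def by (intro continuous_intros) auto
  qed
  have cL: "isCont (\<lambda>x. ln (1 - s*x)) x" if xs: "x \<in> S" for x
    using sxS[OF xs] by (intro continuous_intros) auto
  have cont1: "continuous_on S f1"
  proof (intro continuous_at_imp_continuous_on ballI)
    fix x assume xs: "x \<in> S"
    show "isCont f1 x" unfolding f1_def
      by (intro isCont_mult cW[OF xs] cL[OF xs]) (simp add: C_def gegenbauer_isCont)
  qed
  have cont2: "continuous_on S f2" unfolding f2_def
    using cW by (intro continuous_at_imp_continuous_on ballI continuous_intros)
      (auto simp: D_def dgeg_isCont)
  have i1: "set_integrable lborel S f1" unfolding S_def
  proof (rule int_by_bound[where r = "l - 1/2 - d" and C = "BC * c'"])
    show "l - 1/2 - d > -1" using l by (simp add: d_def field_simps)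
    show "continuous_on {-1<..<1} f1" using cont1 by (simp add: S_def)
    fix x :: real assume x: "x \<in> {-1<..<1}"
    hence xs: "x \<in> S" by (simp add: S_def)
    have "\<bar>f1 x\<bar> = W x * (\<bar>C x\<bar> * \<bar>ln (1 - s*x)\<bar>)"
      by (simp add: f1_def abs_mult W0 mult.assoc)
    also have "\<dots> \<le> W x * (BC * (c' * (1 - x^2) powr (-d)))"
      using BCS[OF xs] lnb[OF xs] W0 by (intro mult_left_mono mult_mono) auto
    also have "\<dots> = BC * c' * (W x * (1 - x^2) powr (-d))" by (simp add: mult_ac)
    also have "W x * (1 - x^2) powr (-d) = (1 - x^2) powr (l - 1/2 - d)"
      by (simp add: W_def powr_add[symmetric])
    finally show "\<bar>f1 x\<bar> \<le> BC * c' * (1 - x^2) powr (l - 1/2 - d)" .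
  qed
  have i2: "set_integrable lborel S f2" unfolding S_def
  proof (rule int_by_bound[where r = "l - 1/2" and C = "2 * BD"])
    show "l - 1/2 > -1" using l by simp
    show "continuous_on {-1<..<1} f2" using cont2 by (simp add: S_def)
    fix x :: real assume x: "x \<in> {-1<..<1}"
    hence xs: "x \<in> S" by (simp add: S_def)
    have a: "\<bar>1 + s*x\<bar> \<le> 2" using s x by auto
    have "\<bar>f2 x\<bar> = W x * (\<bar>1 + s*x\<bar> * \<bar>D x\<bar>)"
      by (simp add: f2_def abs_mult W0 mult.assoc)
    also have "\<dots> \<le> W x * (2 * BD)"
      using a BDS[OF xs] W0 by (intro mult_left_mono mult_mono) auto
    finally show "\<bar>f2 x\<bar> \<le> 2 * BD * (1 - x^2) powr (l - 1/2)" by (simp add: W_def mult_ac)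
  qed
  define A where "A = -(n*(n+2*l))"
  define f where "f = (\<lambda>x. A * f1 x - s * f2 x)"
  have deriv: "(F has_real_derivative f x) (at x)" if xs: "x \<in> S" for x
  proof -
    have x2: "0 < 1 - x^2" using xS[OF xs] .
    have sx: "0 < 1 - s*x" using sxS[OF xs] .
    have dsq: "((\<lambda>x. 1 - x^2) has_real_derivative (-2*x)) (at x)"
      by (auto intro!: derivative_eq_intros)
    have dW: "(W has_real_derivative ((l - 1/2) * (1 - x^2) powr (l - 1/2 - 1) * (-2*x))) (at x)"
      unfolding W_def using DERIV_chain2[OF has_real_derivative_powr[OF x2, where r="l - 1/2"] dsq] by simp
    have dR: "((\<lambda>x. - n * x * C x + k * C0 x) has_real_derivative (-n * (C x + x * D x) + k * D0 x)) (at x)"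
      unfolding C_def C0_def D_def D0_def
      by (auto intro!: derivative_eq_intros gegenbauer_deriv simp: algebra_simps)
    have dL: "((\<lambda>x. ln (1 - s*x)) has_real_derivative (-s / (1 - s*x))) (at x)"
      using sx by (auto intro!: derivative_eq_intros simp: field_simps)
    have dF: "(F has_real_derivative
        ((l - 1/2) * (1 - x^2) powr (l - 1/2 - 1) * (-2*x)) * ((- n * x * C x + k * C0 x) * ln (1 - s*x))
        + ((-n * (C x + x * D x) + k * D0 x) * ln (1 - s*x) + (-s / (1 - s*x)) * (- n * x * C x + k * C0 x)) * W x) (at x)"
      unfolding F_def by (intro DERIV_mult dW dR dL)
    have W1: "(1 - x^2) powr (l - 1/2 - 1) = W x / (1 - x^2)"
    proof -
      have "W x = (1 - x^2) powr (l - 1/2 - 1) * (1 - x^2) powr 1"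
        unfolding W_def powr_add[symmetric] by simp
      also have "(1 - x^2) powr 1 = 1 - x^2" using x2 by simp
      finally show ?thesis using x2 by simp
    qed
    have I3: "(1 - x^2) * D x = - n * x * C x + k * C0 x"
      unfolding D_def C_def C0_def n_def k_def by (rule dgeg_I3)
    have I1: "D0 x = x * D x - n * C x"
      unfolding D_def D0_def C_def n_def by (rule dgeg_I1)
    show ?thesis
      using alg_deriv[OF _ _ s I3 I1 kn W1, of "ln (1 - s*x)"] x2 sx dF
      by (simp add: f_def f1_def f2_def A_def)
  qed
  have Fb: "\<bar>F x\<bar> \<le> BD * c' * (1 - x^2) powr d" if xs: "x \<in> S" for x
  proof -
    have x2: "0 < 1 - x^2" using xS[OF xs] .
    have I3: "- n * x * C x + k * C0 x = (1 - x^2) * D x"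
      unfolding D_def C_def C0_def n_def k_def by (rule dgeg_I3[symmetric])
    have "\<bar>F x\<bar> = (W x * (1 - x^2)) * (\<bar>D x\<bar> * \<bar>ln (1 - s*x)\<bar>)"
      unfolding F_def I3 using x2 W0 by (simp add: abs_mult mult_ac)
    also have "\<dots> \<le> (W x * (1 - x^2)) * (BD * (c' * (1 - x^2) powr (-d)))"
      using BDS[OF xs] lnb[OF xs] W0 x2 by (intro mult_left_mono mult_mono) auto
    also have "\<dots> = BD * c' * (W x * (1 - x^2) powr 1 * (1 - x^2) powr (-d))"
      using x2 by (simp add: mult_ac)
    also have "W x * (1 - x^2) powr 1 * (1 - x^2) powr (-d) = (1 - x^2) powr d"
      unfolding W_def powr_add[symmetric]
      by (rule arg_cong[where f="\<lambda>e. (1 - x^2) powr e"]) (simp add: d_def field_simps)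
    finally show ?thesis .
  qed
  have gl1: "((\<lambda>x. BD * c' * (1 - x^2) powr d) \<longlongrightarrow> 0) (at_left 1)"
    using tendsto_mult[OF tendsto_const powr_lim(1)[OF d0], of "BD * c'"] by simp
  have gl2: "((\<lambda>x. BD * c' * (1 - x^2) powr d) \<longlongrightarrow> 0) (at_right (-1))"
    using tendsto_mult[OF tendsto_const powr_lim(2)[OF d0], of "BD * c'"] by simp
  have FL1: "(F \<longlongrightarrow> 0) (at_left 1)"
  proof (rule Lim_null_comparison[OF _ gl1])
    show "\<forall>\<^sub>F x in at_left 1. norm (F x) \<le> BD * c' * (1 - x^2) powr d"
      using eventually_at_left_real[of "-1" 1] by (rule eventually_mono) (auto intro: Fb simp: S_def)
  qed
  have FL2: "(F \<longlongrightarrow> 0) (at_right (-1))"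
  proof (rule Lim_null_comparison[OF _ gl2])
    show "\<forall>\<^sub>F x in at_right (-1). norm (F x) \<le> BD * c' * (1 - x^2) powr d"
      using eventually_at_right_real[of "-1" 1] by (rule eventually_mono) (auto intro: Fb simp: S_def)
  qed
  have fi: "set_integrable lborel S f"
    unfolding f_def using i1 i2 by (intro set_integral_diff(1) set_integrable_mult_right)
  have cf: "isCont f x" if "x \<in> S" for x
  proof -
    have "continuous_on S f" unfolding f_def using cont1 cont2 by (intro continuous_intros)
    thus ?thesis using that by (simp add: S_def continuous_on_eq_continuous_at)
  qed
  have "(LBINT x=-1..1. f x) = 0 - 0"
  proof (rule interval_integral_FTC_integrable)
    show "(-1::ereal) < 1" by (simp add: ereal_m1 one_ereal_def)
    show "(F has_vector_derivative f x) (at x)" if "-1 < ereal x" "ereal x < 1" for x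
      using deriv[of x] that by (simp add: ereal_lt_iff S_def has_real_derivative_iff_has_vector_derivative[symmetric])
    show "isCont f x" if "-1 < ereal x" "ereal x < 1" for x
      using cf[of x] that by (simp add: ereal_lt_iff S_def)
    show "set_integrable lborel (einterval (-1) 1) f" using fi by (simp add: einterval_m1_1 S_def)
    show "((F \<circ> real_of_ereal) \<longlongrightarrow> 0) (at_right (-1))"
      unfolding ereal_m1 ereal_tendsto_simps1 using FL2 .
    have "((F \<circ> real_of_ereal) \<longlongrightarrow> 0) (at_left (ereal 1))"
      unfolding ereal_tendsto_simps1 using FL1 .
    thus "((F \<circ> real_of_ereal) \<longlongrightarrow> 0) (at_left 1)" by (simp add: one_ereal_def)
  qed
  hence "(LBINT x:S. f x) = 0" by (simp add: LBINT_m1_1 S_def)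
  moreover have "(LBINT x:S. f x) = (LBINT x:S. A * f1 x) - (LBINT x:S. s * f2 x)"
    unfolding f_def using i1 i2 by (intro set_integral_diff(2) set_integrable_mult_right)
  ultimately have "A * (LBINT x:S. f1 x) - s * (LBINT x:S. f2 x) = 0"
    by (simp only: set_integral_mult_right)
  moreover have "n*(n+2*l) > 0" using l by (simp add: n_def)
  ultimately have "(LBINT x:S. f1 x) = - s / (n*(n+2*l)) * (LBINT x:S. f2 x)"
    by (simp add: field_simps A_def)
  thus ?thesis by (simp add: f1_def f2_def S_def W_def C_def D_def n_def)
qed

lemma wint:
  fixes l :: real and g :: "real \<Rightarrow> real"
  assumes l: "l > -1/2" and g: "\<And>x. isCont g x"
  shows "set_integrable lborel {-1<..<1} (\<lambda>x. (1 - x^2) powr (l - 1/2) * g x)"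
proof -
  have cg: "continuous_on {-1..1} g" by (intro continuous_at_imp_continuous_on ballI g)
  obtain B where B: "\<And>x. x \<in> {-1..1} \<Longrightarrow> norm (g x) \<le> B"
    using continuous_on_compact_bound[OF compact_Icc cg] by blast
  show ?thesis
  proof (rule int_by_bound[where r = "l - 1/2" and C = B])
    show "l - 1/2 > -1" using l by simp
    have "isCont (\<lambda>x. (1 - x^2) powr (l - 1/2) * g x) x" if "x \<in> {-1<..<1}" for x
    proof -
      have "1 - x^2 \<noteq> 0" using x2_pos[OF that] by simp
      thus ?thesis by (intro continuous_intros g) auto
    qed
    thus "continuous_on {-1<..<1} (\<lambda>x. (1 - x^2) powr (l - 1/2) * g x)"
      by (intro continuous_at_imp_continuous_on ballI)
    fix x :: real assume x: "x \<in> {-1<..<1}"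
    have "\<bar>(1 - x^2) powr (l - 1/2) * g x\<bar> = (1 - x^2) powr (l - 1/2) * \<bar>g x\<bar>"
      by (simp add: abs_mult)
    also have "\<dots> \<le> (1 - x^2) powr (l - 1/2) * B"
      using B[of x] x by (intro mult_left_mono) auto
    finally show "\<bar>(1 - x^2) powr (l - 1/2) * g x\<bar> \<le> B * (1 - x^2) powr (l - 1/2)"
      by (simp add: mult_ac)
  qed
qed

lemma alg_deriv0:
  fixes W W1 C C0 D D0 x n k l :: real
  assumes x2: "1 - x^2 \<noteq> 0"
    and I3: "(1 - x^2) * D = - n * x * C + k * C0" and I1: "D0 = x * D - n * C"
    and k: "k = n - 1 + 2*l" and W1: "W1 = W / (1 - x^2)"
  shows "((l - 1/2) * W1 * (-2*x)) * (- n * x * C + k * C0) + (-n * (C + x * D) + k * D0) * W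
       = -(n*(n+2*l)) * (W * C)"
proof -
  have R: "- n * x * C + k * C0 = (1 - x^2) * D" using I3 by simp
  have e1: "(W / (1 - x^2)) * ((1 - x^2) * D) = W * D" using x2 by simp
  have "((l - 1/2) * W1 * (-2*x)) * (- n * x * C + k * C0) + (-n * (C + x * D) + k * D0) * W
      = (l - 1/2) * (-2*x) * ((W / (1 - x^2)) * ((1 - x^2) * D))
        + (-n * (C + x * D) + k * (x * D - n * C)) * W"
    unfolding R W1 I1 by (simp add: algebra_simps)
  also have "\<dots> = (l - 1/2) * (-2*x) * (W * D) + (-n * (C + x * D) + k * (x * D - n * C)) * W"
    unfolding e1 ..
  also have "\<dots> = -(n*(n+2*l)) * (W * C)"
    unfolding k by (simp add: algebra_simps)
  finally show ?thesis .
qed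

lemma orth0:
  fixes l :: real and m :: nat
  assumes l: "l > -1/2"
  shows "(LBINT x:{-1<..<1}. (1 - x^2) powr (l - 1/2) * gegenbauer l (Suc m) x) = 0"
proof -
  define n where "n = real (Suc m)"
  define k where "k = real m + 2*l"
  define S where "S = {-1<..<(1::real)}"
  define W where "W = (\<lambda>x::real. (1 - x^2) powr (l - 1/2))"
  define C where "C = gegenbauer l (Suc m)"
  define C0 where "C0 = gegenbauer l m"
  define D where "D = dgeg l (Suc m)"
  define D0 where "D0 = dgeg l m"
  define F where "F = (\<lambda>x. W x * (- n * x * C x + k * C0 x))"
  define A where "A = -(n*(n+2*l))"
  define f where "f = (\<lambda>x. A * (W x * C x))"
  have kn: "k = n - 1 + 2*l" by (simp add: k_def n_def)
  have xS: "\<And>x. x \<in> S \<Longrightarrow> 0 < 1 - x^2" unfolding S_def by (rule x2_pos)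
  have W0: "\<And>x. 0 \<le> W x" by (simp add: W_def)
  have cD: "continuous_on {-1..1} D" unfolding D_def
    by (intro continuous_at_imp_continuous_on ballI dgeg_isCont)
  obtain BD where BD: "\<And>x. x \<in> {-1..1} \<Longrightarrow> norm (D x) \<le> BD"
    using continuous_on_compact_bound[OF compact_Icc cD] by blast
  have BDS: "\<And>x. x \<in> S \<Longrightarrow> \<bar>D x\<bar> \<le> BD" using BD by (auto simp: S_def)
  have i1: "set_integrable lborel S (\<lambda>x. W x * C x)"
    unfolding S_def W_def C_def by (rule wint[OF l gegenbauer_isCont])
  have fi: "set_integrable lborel S f" unfolding f_def using i1 by (rule set_integrable_mult_right)
  have deriv: "(F has_real_derivative f x) (at x)" if xs: "x \<in> S" for x
  proof -
    have x2: "0 < 1 - x^2" using xS[OF xs] .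
    have dsq: "((\<lambda>x. 1 - x^2) has_real_derivative (-2*x)) (at x)"
      by (auto intro!: derivative_eq_intros)
    have dW: "(W has_real_derivative ((l - 1/2) * (1 - x^2) powr (l - 1/2 - 1) * (-2*x))) (at x)"
      unfolding W_def using DERIV_chain2[OF has_real_derivative_powr[OF x2, where r="l - 1/2"] dsq] by simp
    have dR: "((\<lambda>x. - n * x * C x + k * C0 x) has_real_derivative (-n * (C x + x * D x) + k * D0 x)) (at x)"
      unfolding C_def C0_def D_def D0_def
      by (auto intro!: derivative_eq_intros gegenbauer_deriv simp: algebra_simps)
    have dF: "(F has_real_derivative
        ((l - 1/2) * (1 - x^2) powr (l - 1/2 - 1) * (-2*x)) * (- n * x * C x + k * C0 x)
        + (-n * (C x + x * D x) + k * D0 x) * W x) (at x)"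
      unfolding F_def by (intro DERIV_mult dW dR)
    have W1: "(1 - x^2) powr (l - 1/2 - 1) = W x / (1 - x^2)"
    proof -
      have "W x = (1 - x^2) powr (l - 1/2 - 1) * (1 - x^2) powr 1"
        unfolding W_def powr_add[symmetric] by simp
      also have "(1 - x^2) powr 1 = 1 - x^2" using x2 by simp
      finally show ?thesis using x2 by simp
    qed
    have I3: "(1 - x^2) * D x = - n * x * C x + k * C0 x"
      unfolding D_def C_def C0_def n_def k_def by (rule dgeg_I3)
    have I1: "D0 x = x * D x - n * C x"
      unfolding D_def D0_def C_def n_def by (rule dgeg_I1)
    show ?thesis
      using alg_deriv0[OF _ I3 I1 kn W1] x2 dF
      by (simp add: f_def A_def)
  qed
  have Fb: "\<bar>F x\<bar> \<le> BD * (1 - x^2) powr (l + 1/2)" if xs: "x \<in> S" for x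
  proof -
    have x2: "0 < 1 - x^2" using xS[OF xs] .
    have I3: "- n * x * C x + k * C0 x = (1 - x^2) * D x"
      unfolding D_def C_def C0_def n_def k_def by (rule dgeg_I3[symmetric])
    have "\<bar>F x\<bar> = (W x * (1 - x^2)) * \<bar>D x\<bar>"
      unfolding F_def I3 using x2 W0 by (simp add: abs_mult mult_ac)
    also have "\<dots> \<le> (W x * (1 - x^2)) * BD"
      using BDS[OF xs] W0 x2 by (intro mult_left_mono) auto
    also have "W x * (1 - x^2) = W x * (1 - x^2) powr 1" using x2 by simp
    also have "W x * (1 - x^2) powr 1 = (1 - x^2) powr (l + 1/2)"
      unfolding W_def powr_add[symmetric]
      by (rule arg_cong[where f="\<lambda>e. (1 - x^2) powr e"]) simp
    finally show ?thesis by (simp add: mult_ac)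
  qed
  have e0: "l + 1/2 > 0" using l by simp
  have gl1: "((\<lambda>x. BD * (1 - x^2) powr (l + 1/2)) \<longlongrightarrow> 0) (at_left 1)"
    using tendsto_mult[OF tendsto_const powr_lim(1)[OF e0], of BD] by simp
  have gl2: "((\<lambda>x. BD * (1 - x^2) powr (l + 1/2)) \<longlongrightarrow> 0) (at_right (-1))"
    using tendsto_mult[OF tendsto_const powr_lim(2)[OF e0], of BD] by simp
  have FL1: "(F \<longlongrightarrow> 0) (at_left 1)"
  proof (rule Lim_null_comparison[OF _ gl1])
    show "\<forall>\<^sub>F x in at_left 1. norm (F x) \<le> BD * (1 - x^2) powr (l + 1/2)"
      using eventually_at_left_real[of "-1" 1] by (rule eventually_mono) (auto intro: Fb simp: S_def)
  qed
  have FL2: "(F \<longlongrightarrow> 0) (at_right (-1))"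
  proof (rule Lim_null_comparison[OF _ gl2])
    show "\<forall>\<^sub>F x in at_right (-1). norm (F x) \<le> BD * (1 - x^2) powr (l + 1/2)"
      using eventually_at_right_real[of "-1" 1] by (rule eventually_mono) (auto intro: Fb simp: S_def)
  qed
  have cf: "isCont f x" if xs: "x \<in> S" for x
  proof -
    have "1 - x^2 \<noteq> 0" using xS[OF xs] by simp
    thus ?thesis unfolding f_def W_def C_def by (intro continuous_intros gegenbauer_isCont) auto
  qed
  have "(LBINT x=-1..1. f x) = 0 - 0"
  proof (rule interval_integral_FTC_integrable)
    show "(-1::ereal) < 1" by (simp add: ereal_m1 one_ereal_def)
    show "(F has_vector_derivative f x) (at x)" if "-1 < ereal x" "ereal x < 1" for x
      using deriv[of x] that by (simp add: ereal_lt_iff S_def has_real_derivative_iff_has_vector_derivative[symmetric])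
    show "isCont f x" if "-1 < ereal x" "ereal x < 1" for x
      using cf[of x] that by (simp add: ereal_lt_iff S_def)
    show "set_integrable lborel (einterval (-1) 1) f" using fi by (simp add: einterval_m1_1 S_def)
    show "((F \<circ> real_of_ereal) \<longlongrightarrow> 0) (at_right (-1))"
      unfolding ereal_m1 ereal_tendsto_simps1 using FL2 .
    have "((F \<circ> real_of_ereal) \<longlongrightarrow> 0) (at_left (ereal 1))"
      unfolding ereal_tendsto_simps1 using FL1 .
    thus "((F \<circ> real_of_ereal) \<longlongrightarrow> 0) (at_left 1)" by (simp add: one_ereal_def)
  qed
  hence "(LBINT x:S. f x) = 0" by (simp add: LBINT_m1_1 S_def)
  hence "A * (LBINT x:S. W x * C x) = 0" unfolding f_def by (simp only: set_integral_mult_right)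
  moreover have "A \<noteq> 0" using l by (simp add: A_def n_def)
  ultimately show ?thesis by (simp add: S_def W_def C_def)
qed

definition Iw :: "real \<Rightarrow> (real \<Rightarrow> real) \<Rightarrow> real" where
  "Iw l g = (LBINT x:{-1<..<1}. (1 - x^2) powr (l - 1/2) * g x)"

lemma Iw_scale: "Iw l (\<lambda>x. a * g x) = a * Iw l g"
  unfolding Iw_def by (simp add: mult.left_commute)

lemma Iw_add:
  assumes "l > -1/2" "\<And>x. isCont g x" "\<And>x. isCont h x"
  shows "Iw l (\<lambda>x. g x + h x) = Iw l g + Iw l h"
proof -
  have "Iw l (\<lambda>x. g x + h x) = (LBINT x:{-1<..<1}. (1 - x^2) powr (l - 1/2) * g x + (1 - x^2) powr (l - 1/2) * h x)"
    unfolding Iw_def by (simp add: distrib_left)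
  also have "\<dots> = Iw l g + Iw l h"
    unfolding Iw_def using wint[OF assms(1,2)] wint[OF assms(1,3)]
    by (rule set_integral_add(2))
  finally show ?thesis .
qed

lemma Iw_cong: "(\<And>x. g x = h x) \<Longrightarrow> Iw l g = Iw l h"
  by (simp add: Iw_def)

lemma dgeg_step: "dgeg l (Suc (Suc m)) x - dgeg l m x = 2 * (real m + 1 + l) * gegenbauer l (Suc m) x"
proof -
  define b where "b = gegenbauer l (Suc m) x"
  define db where "db = dgeg l (Suc m) x"
  define da where "da = dgeg l m x"
  have I1: "da = x * db - real (Suc m) * b" unfolding da_def db_def b_def by (rule dgeg_I1)
  have dc: "dgeg l (Suc (Suc m)) x = (2 * (real m + 1 + l) * b + 2 * x * (real m + 1 + l) * db
      - (real m + 2 * l) * da) / (real m + 2)" by (simp add: b_def db_def da_def)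
  have num: "2 * (real m + 1 + l) * b + 2 * x * (real m + 1 + l) * db - (real m + 2 * l) * da
      = (real m + 2) * ((real m + 1 + 2*l) * b + x * db)"
    unfolding I1 by (simp add: algebra_simps)
  have "dgeg l (Suc (Suc m)) x = (real m + 1 + 2*l) * b + x * db"
    unfolding dc num by simp
  thus ?thesis unfolding da_def[symmetric] using I1 by (simp add: b_def algebra_simps)
qed

lemma x_rec:
  assumes "real m + 1 + l \<noteq> 0"
  shows "x * gegenbauer l (Suc m) x = ((real m + 2) * gegenbauer l (Suc (Suc m)) x + (real m + 2*l) * gegenbauer l m x) / (2 * (real m + 1 + l))"
proof -
  have "(real m + 2) * gegenbauer l (Suc (Suc m)) x = 2 * x * (real m + 1 + l) * gegenbauer l (Suc m) x - (real m + 2 * l) * gegenbauer l m x"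
    by simp
  hence "(real m + 2) * gegenbauer l (Suc (Suc m)) x + (real m + 2*l) * gegenbauer l m x = (2 * (real m + 1 + l)) * (x * gegenbauer l (Suc m) x)"
    by (simp add: algebra_simps)
  moreover have c: "2 * (real m + 1 + l) \<noteq> 0" using assms by simp
  ultimately show ?thesis by (simp only: nonzero_mult_div_cancel_left[OF c])
qed


lemma Iw_one: "l > -1/2 \<Longrightarrow> Iw l (\<lambda>x. 1) = sqrt pi * Gamma (l + 1/2) / Gamma (l + 1)"
  unfolding Iw_def using W0_value by simp

lemma Iw_orth0: "l > -1/2 \<Longrightarrow> Iw l (gegenbauer l (Suc m)) = 0"
  unfolding Iw_def using orth0 by simp

lemma Iw_x: assumes "l > -1/2" "l \<noteq> 0" shows "Iw l (\<lambda>x. x) = 0"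
proof -
  have "Iw l (gegenbauer l (Suc 0)) = Iw l (\<lambda>x. (2*l) * x)" by (rule Iw_cong) simp
  also have "\<dots> = 2*l * Iw l (\<lambda>x. x)" by (rule Iw_scale)
  finally show ?thesis using Iw_orth0[OF assms(1), of 0] assms(2) by simp
qed

lemma Iw_x2: assumes l: "l > -1/2" "l \<noteq> 0" shows "Iw l (\<lambda>x. x^2) = Iw l (\<lambda>x. 1) / (2*(l+1))"
proof -
  have "Iw l (gegenbauer l (Suc (Suc 0))) = Iw l (\<lambda>x. (2*l*(1+l)) * x^2 + (-l) * 1)"
    by (rule Iw_cong) (simp add: power2_eq_square field_simps)
  also have "\<dots> = Iw l (\<lambda>x. (2*l*(1+l)) * x^2) + Iw l (\<lambda>x. (-l) * 1)"
    by (rule Iw_add[OF l(1)]) (intro continuous_intros)+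
  also have "\<dots> = (2*l*(1+l)) * Iw l (\<lambda>x. x^2) + (-l) * Iw l (\<lambda>x. 1)"
    by (simp only: Iw_scale)
  finally have "(2*l*(1+l)) * Iw l (\<lambda>x. x^2) + (-l) * Iw l (\<lambda>x. 1) = 0"
    using Iw_orth0[OF l(1), of 1] by simp
  hence "l * (2*(1+l) * Iw l (\<lambda>x. x^2) - Iw l (\<lambda>x. 1)) = 0" by (simp add: algebra_simps)
  hence "2*(1+l) * Iw l (\<lambda>x. x^2) = Iw l (\<lambda>x. 1)" using l(2) by simp
  moreover have "1 + l \<noteq> 0" using l by simp
  ultimately show ?thesis by (simp add: field_simps)
qed

lemma lin_div: "(d::real) \<noteq> 0 \<Longrightarrow> (p*A + q*B)/d = (p/d)*A + (q/d)*B"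
  by (simp add: field_simps)

lemma Iw_orth1: assumes l: "l > -1/2" shows "Iw l (\<lambda>x. x * gegenbauer l (Suc (Suc m)) x) = 0"
proof -
  have c: "real (Suc m) + 1 + l \<noteq> 0" using l by simp
  define a where "a = (real (Suc m) + 2) / (2 * (real (Suc m) + 1 + l))"
  define b where "b = (real (Suc m) + 2*l) / (2 * (real (Suc m) + 1 + l))"
  have "Iw l (\<lambda>x. x * gegenbauer l (Suc (Suc m)) x) = Iw l (\<lambda>x. a * gegenbauer l (Suc (Suc (Suc m))) x + b * gegenbauer l (Suc m) x)"
    by (rule Iw_cong, subst x_rec[OF c], unfold a_def b_def, rule lin_div) (use c in simp)
  also have "\<dots> = Iw l (\<lambda>x. a * gegenbauer l (Suc (Suc (Suc m))) x) + Iw l (\<lambda>x. b * gegenbauer l (Suc m) x)"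
    by (rule Iw_add[OF l]) (intro continuous_intros gegenbauer_isCont)+
  also have "\<dots> = 0" by (simp only: Iw_scale Iw_orth0[OF l])
  finally show ?thesis .
qed

lemma Iw_U:
  assumes l: "l > -1/2" "l \<noteq> 0" and s: "s = 1 \<or> s = -1"
  shows "Iw l (\<lambda>x. (1 + s*x) * dgeg l (Suc m) x) = s^m * (2*l * Iw l (\<lambda>x. 1))"
proof (induction m rule: less_induct)
  case (less m)
  show ?case
  proof (cases m)
    case 0
    have "Iw l (\<lambda>x. (1 + s*x) * dgeg l (Suc 0) x) = Iw l (\<lambda>x. (2*l) * 1 + (2*l* s) * x)"
      by (rule Iw_cong) (simp add: algebra_simps)
    also have "\<dots> = Iw l (\<lambda>x. (2*l) * 1) + Iw l (\<lambda>x. (2*l* s) * x)"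
      by (rule Iw_add[OF l(1)]) (intro continuous_intros)+
    also have "\<dots> = 2*l * Iw l (\<lambda>x. 1)" by (simp only: Iw_scale Iw_x[OF l] mult_zero_right add_0_right)
    finally show ?thesis using 0 by simp
  next
    case (Suc k)
    show ?thesis
    proof (cases k)
      case 0
      have d2: "dgeg l (Suc (Suc 0)) x = (4*l*(l+1)) * x" for x by (simp add: algebra_simps)
      have "Iw l (\<lambda>x. (1 + s*x) * dgeg l (Suc (Suc 0)) x) = Iw l (\<lambda>x. (4*l*(l+1)) * x + (4*l*(l+1)* s) * x^2)"
        by (rule Iw_cong) (simp add: d2 algebra_simps power2_eq_square)
      also have "\<dots> = Iw l (\<lambda>x. (4*l*(l+1)) * x) + Iw l (\<lambda>x. (4*l*(l+1)* s) * x^2)"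
        by (rule Iw_add[OF l(1)]) (intro continuous_intros)+
      also have "\<dots> = (4*l*(l+1)* s) * (Iw l (\<lambda>x. 1) / (2*(l+1)))"
        by (simp only: Iw_scale Iw_x[OF l] Iw_x2[OF l])
      also have "\<dots> = s * (2*l * Iw l (\<lambda>x. 1))"
        using l by (simp add: field_simps)
      finally show ?thesis using Suc 0 by simp
    next
      case (Suc j)
      have mj: "m = Suc (Suc j)" using \<open>m = Suc k\<close> Suc by simp
      have IH: "Iw l (\<lambda>x. (1 + s*x) * dgeg l (Suc j) x) = s^j * (2*l * Iw l (\<lambda>x. 1))"
        using less.IH[of j] mj by simp
      define c where "c = 2 * (real (Suc j) + 1 + l)"
      have "Iw l (\<lambda>x. (1 + s*x) * dgeg l (Suc m) x)
          = Iw l (\<lambda>x. (1 + s*x) * dgeg l (Suc j) x + (c * gegenbauer l (Suc (Suc j)) x + (c* s) * (x * gegenbauer l (Suc (Suc j)) x)))"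
      proof (rule Iw_cong)
        fix x
        have "dgeg l (Suc m) x = dgeg l (Suc j) x + c * gegenbauer l (Suc (Suc j)) x"
          using dgeg_step[of l "Suc j" x] unfolding mj c_def by simp
        thus "(1 + s*x) * dgeg l (Suc m) x = (1 + s*x) * dgeg l (Suc j) x + (c * gegenbauer l (Suc (Suc j)) x + (c* s) * (x * gegenbauer l (Suc (Suc j)) x))"
          by (simp del: gegenbauer.simps dgeg.simps add: algebra_simps)
      qed
      also have "\<dots> = Iw l (\<lambda>x. (1 + s*x) * dgeg l (Suc j) x) + (Iw l (\<lambda>x. c * gegenbauer l (Suc (Suc j)) x) + Iw l (\<lambda>x. (c* s) * (x * gegenbauer l (Suc (Suc j)) x)))"
        by (subst Iw_add[OF l(1)], (intro continuous_intros gegenbauer_isCont dgeg_isCont)+)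
           (subst Iw_add[OF l(1)], (intro continuous_intros gegenbauer_isCont dgeg_isCont)+, rule refl)
      also have "\<dots> = s^j * (2*l * Iw l (\<lambda>x. 1))"
        by (simp only: Iw_scale IH Iw_orth0[OF l(1)] Iw_orth1[OF l(1)])
      also have "s^j = s^m" using s mj by auto
      finally show ?thesis .
    qed
  qed
qed

lemma final_alg0:
  fixes G H A B E sp P Q N l p M1 M2 :: real
  assumes "G \<noteq> 0" "H \<noteq> 0" "A \<noteq> 0" "B \<noteq> 0" "E \<noteq> 0" "sp > 0" "Q > 0" "N > 0" "M1 \<noteq> 0" "M2 \<noteq> 0"
    "l \<noteq> 0" "p = sp * sp" "P = 2 / Q"
  shows "2*l*(sp * H / (l * G)) / (N*M2 * ((Q * p / G^2) * (E / (A * M1))))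
       = P * G * H / sp * (A * (M1 * B) / (N * B * (M2 * E)))"
  using assms by (simp add: field_simps power2_eq_square)

lemma final_alg:
  fixes G H A B E sp P Q N l p :: real
  assumes "G \<noteq> 0" "H \<noteq> 0" "A \<noteq> 0" "B \<noteq> 0" "E \<noteq> 0" "sp > 0" "Q > 0" "N > 0" "N + l \<noteq> 0" "N + 2*l \<noteq> 0"
    "l \<noteq> 0" "p = sp * sp" "P = 2 / Q"
  shows "2*l*(sp * H / (l * G)) / (N*(N+2*l) * ((Q * p / G^2) * (E / (A * (N + l)))))
       = P * G * H / sp * (A * ((N + l) * B) / (N * B * ((N + 2*l) * E)))"
  by (rule final_alg0[OF assms])

lemma gpos_nz: assumes "x > (0::real)" shows "Gamma x \<noteq> 0"
  using Gamma_real_pos[OF assms] by simp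

lemma l_not_nonpos: assumes "l > -1/2" "l \<noteq> (0::real)" shows "l \<notin> \<int>\<^sub>\<le>\<^sub>0"
proof
  assume "l \<in> \<int>\<^sub>\<le>\<^sub>0"
  then obtain k :: int where k: "l = of_int k" "k \<le> 0" by (elim nonpos_Ints_cases)
  have "k \<noteq> 0" using k assms by auto
  hence "k \<le> -1" using k by simp
  hence "l \<le> -1" using k by simp
  thus False using assms by simp
qed

lemma K_ident:
  fixes l :: real and n :: nat
  assumes l: "l > -1/2" "l \<noteq> 0" and n: "n \<ge> 1"
  shows "2*l*(sqrt pi * Gamma (l + 1/2) / Gamma (l + 1)) / (real n * (real n + 2*l) * gegenbauer_h l n)
    = 4 powr l * Gamma l * Gamma (l + 1/2) / sqrt pi *
      (Gamma (real n + 1) * Gamma (real n + l + 1) /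
       (real n * Gamma (real n + l) * Gamma (real n + 1 + 2 * l)))"
proof -
  have N: "real n > 0" using n by simp
  have Nl: "real n + l > 0" "real n + 2*l > 0" using n l by simp_all
  have g1: "Gamma (l + 1) = l * Gamma l" using Gamma_plus1[OF l_not_nonpos[OF l]] .
  have g2: "Gamma (real n + l + 1) = (real n + l) * Gamma (real n + l)"
    using Gamma_plus1[of "real n + l"] Nl by (auto simp: nonpos_Ints_def)
  have g3: "Gamma (real n + 1 + 2*l) = (real n + 2*l) * Gamma (real n + 2*l)"
  proof -
    have "Gamma (real n + 1 + 2*l) = Gamma ((real n + 2*l) + 1)" by (simp add: add_ac)
    also have "\<dots> = (real n + 2*l) * Gamma (real n + 2*l)"
      using Gamma_plus1[of "real n + 2*l"] Nl by (auto simp: nonpos_Ints_def)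
    finally show ?thesis .
  qed
  have PQ: "4 powr l = 2 / 2 powr (1 - 2*l)"
  proof -
    have "(4::real) = 2 powr 2" by simp
    hence "4 powr l = (2 powr 2) powr l" by simp
    also have "\<dots> = 2 powr (2 * l)" by (rule powr_powr)
    also have "\<dots> = 2 powr (1 - (1 - 2*l))" by simp
    also have "\<dots> = 2 powr 1 / 2 powr (1 - 2*l)" by (rule powr_diff)
    finally show ?thesis by simp
  qed
  have G0: "Gamma l \<noteq> 0" using Gamma_nonzero[OF l_not_nonpos[OF l]] .
  have "0 < l + 1/2" using l(1) by simp
  hence "Gamma (l + 1/2) > 0" by (rule Gamma_real_pos)
  hence H0: "Gamma (l + 1/2) \<noteq> 0" by simp
  have A0: "Gamma (real n + 1) \<noteq> 0" by (rule gpos_nz) simp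
  have B0: "Gamma (real n + l) \<noteq> 0" using Nl by (intro gpos_nz) simp
  have E0: "Gamma (real n + 2*l) \<noteq> 0" using Nl by (intro gpos_nz) simp
  show ?thesis
    unfolding g1 g2 g3 gegenbauer_h_def
    by (rule final_alg[OF G0 H0 A0 B0 E0 _ _ N]) (use Nl l in \<open>simp_all add: PQ\<close>)
qed


lemma coeff_s:
  fixes l s :: real and m :: nat
  assumes l: "l > -1/2" "l \<noteq> 0" and s: "s = 1 \<or> s = -1"
  shows "gegenbauer_coeff l (\<lambda>x. ln (1 - s*x)) (Suc m) =
    - s * s^m * (2*l * Iw l (\<lambda>x. 1)) / (real (Suc m) * (real (Suc m) + 2*l) * gegenbauer_h l (Suc m))"
proof -
  have "(LBINT x=-1..1. (1 - x^2) powr (l - 1/2) * ln (1 - s*x) * gegenbauer l (Suc m) x)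
      = (LBINT x:{-1<..<1}. (1 - x^2) powr (l - 1/2) * gegenbauer l (Suc m) x * ln (1 - s*x))"
    unfolding LBINT_m1_1 by (simp add: mult_ac)
  also have "\<dots> = - s / (real (Suc m) * (real (Suc m) + 2*l)) *
         (LBINT x:{-1<..<1}. (1 - x^2) powr (l - 1/2) * (1 + s*x) * dgeg l (Suc m) x)"
    by (rule ibp[OF l(1) s])
  also have "(LBINT x:{-1<..<1}. (1 - x^2) powr (l - 1/2) * (1 + s*x) * dgeg l (Suc m) x)
      = Iw l (\<lambda>x. (1 + s*x) * dgeg l (Suc m) x)"
    unfolding Iw_def by (simp add: mult.assoc)
  also have "\<dots> = s^m * (2*l * Iw l (\<lambda>x. 1))" by (rule Iw_U[OF l s])
  finally show ?thesis unfolding gegenbauer_coeff_def by (simp add: mult_ac)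
qed

theorem lemmaA2:
  fixes l :: real and n :: nat
  assumes "l > -1/2" and "l \<noteq> 0" and "n \<ge> 1"
  defines "K \<equiv> 4 powr l * Gamma l * Gamma (l + 1/2) / sqrt pi *
      (Gamma (real n + 1) * Gamma (real n + l + 1) /
       (real n * Gamma (real n + l) * Gamma (real n + 1 + 2 * l)))"
  shows "gegenbauer_coeff l (\<lambda>x. ln (1 - x)) n = - K \<and>
         gegenbauer_coeff l (\<lambda>x. ln (1 + x)) n = (-1) ^ (n + 1) * K"
proof -
  obtain m where m: "n = Suc m" using assms(3) by (cases n) auto
  have l: "l > -1/2" "l \<noteq> 0" using assms(1,2) .
  have KI: "2*l*(sqrt pi * Gamma (l + 1/2) / Gamma (l + 1)) / (real n * (real n + 2*l) * gegenbauer_h l n) = K"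
    unfolding K_def by (rule K_ident[OF l assms(3)])
  have X: "2*l * Iw l (\<lambda>x. 1) / (real n * (real n + 2*l) * gegenbauer_h l n) = K"
    using KI Iw_one[OF l(1)] by simp
  have c1: "gegenbauer_coeff l (\<lambda>x. ln (1 - 1*x)) n = - 1 * 1^m * (2*l * Iw l (\<lambda>x. 1)) / (real n * (real n + 2*l) * gegenbauer_h l n)"
    unfolding m by (rule coeff_s[OF l]) simp
  have c2: "gegenbauer_coeff l (\<lambda>x. ln (1 - (-1)*x)) n = - (-1) * (-1)^m * (2*l * Iw l (\<lambda>x. 1)) / (real n * (real n + 2*l) * gegenbauer_h l n)"
    unfolding m by (rule coeff_s[OF l]) simp
  have "gegenbauer_coeff l (\<lambda>x. ln (1 - x)) n = - K"
    using c1 X by (simp add: minus_divide_left)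
  moreover have "gegenbauer_coeff l (\<lambda>x. ln (1 + x)) n = (-1) ^ (n + 1) * K"
  proof -
    have "gegenbauer_coeff l (\<lambda>x. ln (1 + x)) n = (-1)^m * (2*l * Iw l (\<lambda>x. 1) / (real n * (real n + 2*l) * gegenbauer_h l n))"
      using c2 by simp
    also have "\<dots> = (-1) ^ (n + 1) * K" unfolding X by (simp add: m)
    finally show ?thesis .
  qed
  ultimately show ?thesis by blast
qed

end
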